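(* Let $f:\mathbb{R}^d\to\mathbb{R}$ be differentiable with a stochastic gradient oracle $\nabla f(x,\xi)$, and let $(x_t,z_t)_{t\ge0}$ be the continuized Nesterov process (see context) with constant parameters $\eta,\eta',\gamma,\gamma'$ satisfying $\eta+\eta'>0$. Define $\tilde y_k=x_{T_{k+1}^-}$, $\tilde x_k=x_{T_k}$, $\tilde z_k=z_{T_k}$ for $k\ge0$. Then for every $k\ge0$, with $\Delta_k=T_{k+1}-T_k$, $$\tilde y_k=(\tilde z_k-\tilde x_k)\frac{\eta}{\eta+\eta'}\big(1-e^{-(\eta+\eta')\Delta_k}\big)+\tilde x_k,\qquad \tilde x_{k+1}=\tilde y_k-\gamma\nabla f(\tilde y_k,\xi_{k+1}),$$ $$\tilde z_{k+1}=\tilde z_k+\eta'\frac{1-e^{-(\eta+\eta')\Delta_k}}{\eta'+\eta e^{-(\eta+\eta')\Delta_k}}(\tilde y_k-\tilde z_k)-\gamma'\nabla f(\tilde y_k,\xi_{k+1}).$$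
   Context: $(\Xi,\mathcal{P})$ is a probability space and $\nabla f(x,\xi)$ is measurable. Continuized Nesterov process: let $T_0=0$, $T_{k+1}-T_k$ ($k\ge0$) i.i.d. exponential with parameter $1$, and $\xi_1,\xi_2,\dots$ i.i.d. with law $\mathcal{P}$, independent of the $T_k$; $N=\sum_{k\ge1}\delta_{(T_k,\xi_k)}$. The càdlàg process $(x_t,z_t)$ starts at $x_0=z_0$ deterministic and solves $dx_t=\eta(z_t-x_t)dt-\gamma\int_\Xi\nabla f(x_{t^-},\xi)\,dN(t,\xi)$, $dz_t=\eta'(x_t-z_t)dt-\gamma'\int_\Xi\nabla f(x_{t^-},\xi)\,dN(t,\xi)$; i.e. between jump times $\dot x=\eta(z-x)$, $\dot z=\eta'(x-z)$, and at each $T_k$ ($k\ge1$) $x_{T_k}=x_{T_k^-}-\gamma\nabla f(x_{T_k^-},\xi_k)$, $z_{T_k}=z_{T_k^-}-\gamma'\nabla f(x_{T_k^-},\xi_k)$. Here $x_{T^-}$ denotes the left limit of $x$ at $T$. *)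

theory Defs
  imports "HOL-Analysis.Analysis"
begin

definition left_lim :: "(real \<Rightarrow> 'b::t2_space) \<Rightarrow> real \<Rightarrow> 'b" where
  "left_lim x t = Lim (at_left t) x"

end

theory Submission
  imports Defs "HOL-Analysis.Analysis"
begin

lemma const_open:
  fixes \<phi> :: "real \<Rightarrow> 'v::real_normed_vector"
  assumes ab: "a < b"
    and d: "\<And>t. a < t \<Longrightarrow> t < b \<Longrightarrow> (\<phi> has_vector_derivative 0) (at t)"
    and c: "continuous (at_right a) \<phi>"
  shows "\<And>t. a < t \<Longrightarrow> t < b \<Longrightarrow> \<phi> t = \<phi> a"
proof -
  have "\<exists>c. \<forall>t\<in>{a<..<b}. \<phi> t = c"
  proof (rule has_derivative_zero_constant)
    fix t assume "t \<in> {a<..<b}"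
    then have "(\<phi> has_vector_derivative 0) (at t within {a<..<b})"
      using d[of t] has_vector_derivative_at_within by auto
    then show "(\<phi> has_derivative (\<lambda>h. 0)) (at t within {a<..<b})"
      by (simp add: has_vector_derivative_def)
  qed auto
  then obtain C where C: "\<And>t. a < t \<Longrightarrow> t < b \<Longrightarrow> \<phi> t = C" by auto
  have ev: "eventually (\<lambda>t. \<phi> t = C) (at_right a)"
    using ab C eventually_at_right_field by (metis (mono_tags, lifting) eventually_at_right)
  have "(\<phi> \<longlongrightarrow> \<phi> a) (at_right a)" using c by (simp add: continuous_within)
  moreover have "(\<phi> \<longlongrightarrow> C) (at_right a)"
    using ev by (simp add: tendsto_eventually)
  ultimately have "\<phi> a = C" using tendsto_unique by (metis trivial_limit_at_right_real)
  then show "\<And>t. a < t \<Longrightarrow> t < b \<Longrightarrow> \<phi> t = \<phi> a" using C by auto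
qed

lemma ode_sol:
  fixes x z :: "real \<Rightarrow> 'v::real_normed_vector"
  assumes ab: "a < b" and s: "s = \<eta> + \<eta>'" "s > 0"
    and xd: "\<And>t. a < t \<Longrightarrow> t < b \<Longrightarrow> (x has_vector_derivative (\<eta> *\<^sub>R (z t - x t))) (at t)"
    and zd: "\<And>t. a < t \<Longrightarrow> t < b \<Longrightarrow> (z has_vector_derivative (\<eta>' *\<^sub>R (x t - z t))) (at t)"
    and xc: "continuous (at_right a) x" and zc: "continuous (at_right a) z"
    and t: "a < t" "t < b"
  shows "x t = x a + (\<eta> / s * (1 - exp (- s * (t - a)))) *\<^sub>R (z a - x a)"
    and "z t = z a + (\<eta>' / s * (1 - exp (- s * (t - a)))) *\<^sub>R (x a - z a)"
proof -
  define \<phi>1 where "\<phi>1 = (\<lambda>t. exp (s * (t - a)) *\<^sub>R (z t - x t))"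
  define \<phi>2 where "\<phi>2 = (\<lambda>t. \<eta>' *\<^sub>R x t + \<eta> *\<^sub>R z t)"
  have "\<phi>1 t = \<phi>1 a"
  proof (rule const_open[OF ab _ _ t])
    fix u assume "a < u" "u < b"
    have "(\<phi>1 has_vector_derivative (exp (s * (u - a)) *\<^sub>R (\<eta>' *\<^sub>R (x u - z u) - \<eta> *\<^sub>R (z u - x u))
         + (exp (s * (u - a)) * (s * 1)) *\<^sub>R (z u - x u))) (at u)"
      unfolding \<phi>1_def
      using \<open>a < u\<close> \<open>u < b\<close> by (intro derivative_eq_intros) (auto intro: xd zd)
    moreover have "exp (s * (u - a)) *\<^sub>R (\<eta>' *\<^sub>R (x u - z u) - \<eta> *\<^sub>R (z u - x u))
         + (exp (s * (u - a)) * (s * 1)) *\<^sub>R (z u - x u) = 0"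
      by (simp add: s algebra_simps)
    ultimately show "(\<phi>1 has_vector_derivative 0) (at u)" by simp
  next
    show "continuous (at_right a) \<phi>1" unfolding \<phi>1_def
      by (intro continuous_intros xc zc)
  qed
  then have h1: "exp (s * (t - a)) *\<^sub>R (z t - x t) = z a - x a"
    unfolding \<phi>1_def by simp
  have e1: "z t - x t = exp (- s * (t - a)) *\<^sub>R (z a - x a)"
    unfolding h1[symmetric] scaleR_scaleR mult_exp_exp by simp
  have "\<phi>2 t = \<phi>2 a"
  proof (rule const_open[OF ab _ _ t])
    fix u assume "a < u" "u < b"
    have "(\<phi>2 has_vector_derivative (\<eta>' *\<^sub>R (\<eta> *\<^sub>R (z u - x u)) + \<eta> *\<^sub>R (\<eta>' *\<^sub>R (x u - z u)))) (at u)"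
      unfolding \<phi>2_def
      using \<open>a < u\<close> \<open>u < b\<close> by (intro derivative_eq_intros) (auto intro: xd zd)
    moreover have "\<eta>' *\<^sub>R (\<eta> *\<^sub>R (z u - x u)) + \<eta> *\<^sub>R (\<eta>' *\<^sub>R (x u - z u)) = 0"
      by (simp add: algebra_simps)
    ultimately show "(\<phi>2 has_vector_derivative 0) (at u)" by simp
  next
    show "continuous (at_right a) \<phi>2" unfolding \<phi>2_def
      by (intro continuous_intros xc zc)
  qed
  then have e2: "\<eta>' *\<^sub>R x t + \<eta> *\<^sub>R z t = \<eta>' *\<^sub>R x a + \<eta> *\<^sub>R z a" unfolding \<phi>2_def .
  define e where "e = exp (- s * (t - a))"
  have "s *\<^sub>R x t = (\<eta>' *\<^sub>R x t + \<eta> *\<^sub>R z t) - \<eta> *\<^sub>R (z t - x t)"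
    by (simp add: s algebra_simps)
  also have "\<dots> = s *\<^sub>R x a + (\<eta> * (1 - e)) *\<^sub>R (z a - x a)"
    unfolding e2 e1 e_def[symmetric] using s by (simp add: algebra_simps)
  also have "\<dots> = s *\<^sub>R (x a + (\<eta> / s * (1 - e)) *\<^sub>R (z a - x a))"
  proof -
    have "s * (\<eta> / s * (1 - e)) = \<eta> * (1 - e)" using s by simp
    then show ?thesis by (simp add: scaleR_add_right)
  qed
  finally show "x t = x a + (\<eta> / s * (1 - exp (- s * (t - a)))) *\<^sub>R (z a - x a)"
    using s unfolding e_def by simp
  have "s *\<^sub>R z t = (\<eta>' *\<^sub>R x t + \<eta> *\<^sub>R z t) + \<eta>' *\<^sub>R (z t - x t)"
    by (simp add: s algebra_simps)
  also have "\<dots> = s *\<^sub>R z a + (\<eta>' * (1 - e)) *\<^sub>R (x a - z a)"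
    unfolding e2 e1 e_def[symmetric] using s by (simp add: algebra_simps)
  also have "\<dots> = s *\<^sub>R (z a + (\<eta>' / s * (1 - e)) *\<^sub>R (x a - z a))"
  proof -
    have "s * (\<eta>' / s * (1 - e)) = \<eta>' * (1 - e)" using s by simp
    then show ?thesis by (simp add: scaleR_add_right)
  qed
  finally show "z t = z a + (\<eta>' / s * (1 - exp (- s * (t - a)))) *\<^sub>R (x a - z a)"
    using s unfolding e_def by simp
qed


theorem proposition2:
  fixes f :: "real ^ 'd \<Rightarrow> real"
    and g :: "real ^ 'd \<Rightarrow> 'a \<Rightarrow> real ^ 'd"
    and \<eta> \<eta>' \<gamma> \<gamma>' :: real
    and T :: "nat \<Rightarrow> real"
    and \<xi> :: "nat \<Rightarrow> 'a"
    and x z :: "real \<Rightarrow> real ^ 'd"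
    and x0 :: "real ^ 'd"
  assumes f_diff: "\<And>u. f differentiable (at u)"
    and eta_pos: "\<eta> + \<eta>' > 0"
    and T0: "T 0 = 0"
    and T_mono: "\<And>k. T k < T (Suc k)"
    and T_unbounded: "filterlim T at_top sequentially"
    and x_init: "x 0 = x0" and z_init: "z 0 = x0"
    and x_cadlag: "\<And>t. t \<ge> 0 \<Longrightarrow> continuous (at_right t) x"
    and z_cadlag: "\<And>t. t \<ge> 0 \<Longrightarrow> continuous (at_right t) z"
    and x_leftlim: "\<And>t. t > 0 \<Longrightarrow> \<exists>l. (x \<longlongrightarrow> l) (at_left t)"
    and z_leftlim: "\<And>t. t > 0 \<Longrightarrow> \<exists>l. (z \<longlongrightarrow> l) (at_left t)"
    and x_ode: "\<And>k t. T k < t \<Longrightarrow> t < T (Suc k) \<Longrightarrow>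
                  (x has_vector_derivative (\<eta> *\<^sub>R (z t - x t))) (at t)"
    and z_ode: "\<And>k t. T k < t \<Longrightarrow> t < T (Suc k) \<Longrightarrow>
                  (z has_vector_derivative (\<eta>' *\<^sub>R (x t - z t))) (at t)"
    and x_jump: "\<And>k. x (T (Suc k)) = left_lim x (T (Suc k))
                     - \<gamma> *\<^sub>R g (left_lim x (T (Suc k))) (\<xi> (Suc k))"
    and z_jump: "\<And>k. z (T (Suc k)) = left_lim z (T (Suc k))
                     - \<gamma>' *\<^sub>R g (left_lim x (T (Suc k))) (\<xi> (Suc k))"
  shows "\<forall>k. let yk = left_lim x (T (Suc k)); xk = x (T k); zk = z (T k);
                 e = exp (- (\<eta> + \<eta>') * (T (Suc k) - T k))
             in yk = ((\<eta> / (\<eta> + \<eta>')) * (1 - e)) *\<^sub>R (zk - xk) + xk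
              \<and> x (T (Suc k)) = yk - \<gamma> *\<^sub>R g yk (\<xi> (Suc k))
              \<and> (\<eta>' + \<eta> * e \<noteq> 0 \<longrightarrow>
                   z (T (Suc k)) = zk + (\<eta>' * (1 - e) / (\<eta>' + \<eta> * e)) *\<^sub>R (yk - zk)
                                    - \<gamma>' *\<^sub>R g yk (\<xi> (Suc k)))"
proof (intro allI)
  fix k
  define a where "a = T k"
  define b where "b = T (Suc k)"
  define s where "s = \<eta> + \<eta>'"
  have ab: "a < b" unfolding a_def b_def by (rule T_mono)
  have Tnn: "\<And>n. T n \<ge> 0"
  proof -
    fix n show "T n \<ge> 0"
      by (induction n) (use T0 T_mono in \<open>auto intro: order.trans less_imp_le\<close>)
  qed
  have a0: "a \<ge> 0" unfolding a_def by (rule Tnn)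
  define F where "F = (\<lambda>t. x a + (\<eta> / s * (1 - exp (- s * (t - a)))) *\<^sub>R (z a - x a))"
  define G where "G = (\<lambda>t. z a + (\<eta>' / s * (1 - exp (- s * (t - a)))) *\<^sub>R (x a - z a))"
  have sol: "x t = F t \<and> z t = G t" if "a < t" "t < b" for t
  proof -
    have xd: "\<And>t. a < t \<Longrightarrow> t < b \<Longrightarrow> (x has_vector_derivative (\<eta> *\<^sub>R (z t - x t))) (at t)"
      unfolding a_def b_def by (rule x_ode)
    have zd: "\<And>t. a < t \<Longrightarrow> t < b \<Longrightarrow> (z has_vector_derivative (\<eta>' *\<^sub>R (x t - z t))) (at t)"
      unfolding a_def b_def by (rule z_ode)
    have sp: "s > 0" using eta_pos s_def by simp
    show ?thesis
      using ode_sol[OF ab s_def sp xd zd x_cadlag[OF a0] z_cadlag[OF a0] that]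
      unfolding F_def G_def by auto
  qed
  have evx: "eventually (\<lambda>t. x t = F t) (at_left b)"
    using ab sol by (auto simp: eventually_at_left_field intro!: exI[of _ a])
  have evz: "eventually (\<lambda>t. z t = G t) (at_left b)"
    using ab sol by (auto simp: eventually_at_left_field intro!: exI[of _ a])
  have "(F \<longlongrightarrow> F b) (at_left b)" unfolding F_def
    by (intro tendsto_intros)
  then have "(x \<longlongrightarrow> F b) (at_left b)"
    using tendsto_cong[OF evx] by simp
  then have yk: "left_lim x b = F b"
    unfolding left_lim_def by (intro tendsto_Lim) auto
  have "(G \<longlongrightarrow> G b) (at_left b)" unfolding G_def
    by (intro tendsto_intros)
  then have "(z \<longlongrightarrow> G b) (at_left b)"
    using tendsto_cong[OF evz] by simp
  then have zl: "left_lim z b = G b"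
    unfolding left_lim_def by (intro tendsto_Lim) auto
  define e where "e = exp (- s * (b - a))"
  have s0: "s > 0" using eta_pos s_def by simp
  show "let yk = left_lim x (T (Suc k)); xk = x (T k); zk = z (T k);
                 e = exp (- (\<eta> + \<eta>') * (T (Suc k) - T k))
             in yk = ((\<eta> / (\<eta> + \<eta>')) * (1 - e)) *\<^sub>R (zk - xk) + xk
              \<and> x (T (Suc k)) = yk - \<gamma> *\<^sub>R g yk (\<xi> (Suc k))
              \<and> (\<eta>' + \<eta> * e \<noteq> 0 \<longrightarrow>
                   z (T (Suc k)) = zk + (\<eta>' * (1 - e) / (\<eta>' + \<eta> * e)) *\<^sub>R (yk - zk)
                                    - \<gamma>' *\<^sub>R g yk (\<xi> (Suc k)))"
    unfolding Let_def a_def[symmetric] b_def[symmetric] s_def[symmetric] e_def[symmetric]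
  proof (intro conjI impI)
    show "left_lim x b = (\<eta> / s * (1 - e)) *\<^sub>R (z a - x a) + x a"
      unfolding yk F_def e_def by simp
    show "x b = left_lim x b - \<gamma> *\<^sub>R g (left_lim x b) (\<xi> (Suc k))"
      unfolding b_def by (rule x_jump)
    assume ne: "\<eta>' + \<eta> * e \<noteq> 0"
    have d1: "left_lim x b - z a = ((\<eta>' + \<eta> * e) / s) *\<^sub>R (x a - z a)"
    proof -
      have "left_lim x b - z a = (1 - \<eta> / s * (1 - e)) *\<^sub>R (x a - z a)"
        unfolding yk F_def e_def by (simp add: algebra_simps)
      moreover have "1 - \<eta> / s * (1 - e) = (\<eta>' + \<eta> * e) / s"
        using s0 unfolding s_def by (simp add: field_simps)
      ultimately show ?thesis by simp
    qed
    have c: "\<eta>' * (1 - e) / (\<eta>' + \<eta> * e) * ((\<eta>' + \<eta> * e) / s) = \<eta>' / s * (1 - e)"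
      using ne s0 by (metis (no_types, lifting) divide_divide_eq_left nonzero_mult_div_cancel_left times_divide_eq_left times_divide_eq_right mult.commute)
    have "z b = G b - \<gamma>' *\<^sub>R g (left_lim x b) (\<xi> (Suc k))"
      using z_jump[of k] zl unfolding b_def by simp
    also have "G b = z a + (\<eta>' * (1 - e) / (\<eta>' + \<eta> * e)) *\<^sub>R (left_lim x b - z a)"
      unfolding d1 scaleR_scaleR c G_def e_def[symmetric] ..
    finally show "z b = z a + (\<eta>' * (1 - e) / (\<eta>' + \<eta> * e)) *\<^sub>R (left_lim x b - z a)
        - \<gamma>' *\<^sub>R g (left_lim x b) (\<xi> (Suc k))" .
  qed
qed

end
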